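(* Let $M$ be a weight sequence of moderate growth such that $\liminf_{k\to\infty}m_k^{1/k}>0$ and $\liminf_{k\to\infty}\mu_{Qk}/\mu_k>1$ for some $Q\in\mathbb{N}_{\ge2}$. Then $\mathcal{B}^{\{M\}}(\mathbb{R}^n)=\mathcal{B}^{\{\omega_M\}}(\mathbb{R}^n)$ and $\mathcal{B}^{\{M\}}(E)=\mathcal{B}^{\{\omega_M\}}(E)$ for every compact $E\subseteq\mathbb{R}^n$.
   Context: A weight sequence is given by an increasing sequence $1=\mu_0\le\mu_1\le\cdots$ via $M_k=\mu_0\cdots\mu_k=k!\,m_k$, with $M_k^{1/k}\to\infty$; it has moderate growth if $M_{j+k}\le C^{j+k}M_jM_k$ for some $C$ and all $j,k$. $\omega_M(t)=\sup_k\log(t^k/M_k)$; under the hypotheses $\omega_M$ is a weight function (continuous increasing, $\omega(0)=0$, $\omega\to\infty$, $\omega(2t)=O(\omega(t))$, $\omega(t)=O(t)$, $\log t=o(\omega(t))$, $\omega(e^t)$ convex). For a weight function $\omega$ (normalized $\omega|_{[0,1]}=0$), $\varphi^*(t)=\sup_{s\ge0}(st-\omega(e^s))$ and $W^x_k=\exp(\frac1x\varphi^*(xk))$. $\mathcal{B}^{\{M\}}(\mathbb{R}^n)$: smooth $f$ with $\sup_{x,\alpha}|\partial^\alpha f(x)|/(\rho^{|\alpha|}M_{|\alpha|})<\infty$ for some $\rho>0$. $\mathcal{B}^{\{\omega\}}(\mathbb{R}^n)$: smooth $f$ with $\sup_{x,\alpha}|\partial^\alpha f(x)|\exp(-\frac1\rho\varphi^*(\rho|\alpha|))<\infty$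 for some $\rho\in\mathbb{N}$. For compact $E$, $\mathcal{B}^{\{M\}}(E)$ consists of jets $F=(F^\alpha)$, $F^\alpha\in C^0(E)$, with $C,\rho>0$ such that $|F^\alpha(a)|\le C\rho^{|\alpha|}M_{|\alpha|}$ and $|(R^p_aF)^\alpha(b)|\le C\rho^{p+1}M_{p+1}\frac{|b-a|^{p+1-|\alpha|}}{(p+1-|\alpha|)!}$ for all $\alpha$, $p\ge|\alpha|$, $a,b\in E$, where $(R^p_aF)^\alpha(b)=F^\alpha(b)-\sum_{|\beta|\le p-|\alpha|}\frac{(b-a)^\beta}{\beta!}F^{\alpha+\beta}(a)$; and $\mathcal{B}^{\{\omega\}}(E)=\bigcup_{x>0}\mathcal{B}^{\{W^x\}}(E)$. *)

theory Defs
  imports "HOL-Analysis.Analysis"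
begin

definition Mseq :: "(nat \<Rightarrow> real) \<Rightarrow> nat \<Rightarrow> real" where
  "Mseq mu k = (\<Prod>j\<in>{0..k}. mu j)"

definition mseq :: "(nat \<Rightarrow> real) \<Rightarrow> nat \<Rightarrow> real" where
  "mseq mu k = Mseq mu k / fact k"

definition weight_sequence :: "(nat \<Rightarrow> real) \<Rightarrow> bool" where
  "weight_sequence mu \<longleftrightarrow> mu 0 = 1 \<and> mono mu \<and>
     filterlim (\<lambda>k. root k (Mseq mu k)) at_top sequentially"

definition moderate_growth :: "(nat \<Rightarrow> real) \<Rightarrow> bool" where
  "moderate_growth mu \<longleftrightarrow>
     (\<exists>C. \<forall>j k. Mseq mu (j + k) \<le> C ^ (j + k) * Mseq mu j * Mseq mu k)"

definition omegaM :: "(nat \<Rightarrow> real) \<Rightarrow> real \<Rightarrow> real" where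
  "omegaM mu t = (if t \<le> 0 then 0 else (SUP k. ln (t ^ k / Mseq mu k)))"

definition phistar :: "(real \<Rightarrow> real) \<Rightarrow> real \<Rightarrow> real" where
  "phistar \<omega> t = (SUP s\<in>{0..}. s * t - \<omega> (exp s))"

definition Wseq :: "(real \<Rightarrow> real) \<Rightarrow> real \<Rightarrow> nat \<Rightarrow> real" where
  "Wseq \<omega> x k = exp (phistar \<omega> (x * real k) / x)"

type_synonym 'n mindex = "'n \<Rightarrow> nat"

definition mlen :: "'n::finite mindex \<Rightarrow> nat" where
  "mlen \<alpha> = (\<Sum>i\<in>UNIV. \<alpha> i)"

definition mfact :: "'n::finite mindex \<Rightarrow> real" where
  "mfact \<alpha> = (\<Prod>i\<in>UNIV. fact (\<alpha> i))"

definition mpow :: "real ^ 'n::finite \<Rightarrow> 'n mindex \<Rightarrow> real" where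
  "mpow v \<beta> = (\<Prod>i\<in>UNIV. (v $ i) ^ (\<beta> i))"

definition dpart :: "'n::finite \<Rightarrow> (real ^ 'n \<Rightarrow> real) \<Rightarrow> real ^ 'n \<Rightarrow> real" where
  "dpart i f x = deriv (\<lambda>t. f (x + t *\<^sub>R axis i 1)) 0"

text \<open>Iterated partial derivative for a multi-index (coordinates processed in a fixed
  enumeration; for smooth functions the order is irrelevant).\<close>

definition dmulti :: "'n::finite mindex \<Rightarrow> (real ^ 'n \<Rightarrow> real) \<Rightarrow> real ^ 'n \<Rightarrow> real" where
  "dmulti \<alpha> f = foldr (\<lambda>i. dpart i ^^ \<alpha> i) (SOME xs. distinct xs \<and> set xs = UNIV) f"

definition smooth :: "(real ^ 'n::finite \<Rightarrow> real) \<Rightarrow> bool" where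
  "smooth f \<longleftrightarrow> (\<forall>is x. foldr dpart is f differentiable (at x))"

definition BM_Rn :: "(nat \<Rightarrow> real) \<Rightarrow> (real ^ 'n::finite \<Rightarrow> real) set" where
  "BM_Rn M = {f. smooth f \<and> (\<exists>\<rho>>0. \<exists>C. \<forall>x \<alpha>.
       \<bar>dmulti \<alpha> f x\<bar> \<le> C * \<rho> ^ mlen \<alpha> * M (mlen \<alpha>))}"

definition Bomega_Rn :: "(real \<Rightarrow> real) \<Rightarrow> (real ^ 'n::finite \<Rightarrow> real) set" where
  "Bomega_Rn \<omega> = {f. smooth f \<and> (\<exists>\<rho>::nat. \<rho> > 0 \<and> (\<exists>C. \<forall>x \<alpha>.
       \<bar>dmulti \<alpha> f x\<bar> \<le> C * exp (phistar \<omega> (real \<rho> * real (mlen \<alpha>)) / real \<rho>)))}"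

definition madd :: "'n mindex \<Rightarrow> 'n mindex \<Rightarrow> 'n mindex" where
  "madd \<alpha> \<beta> = (\<lambda>i. \<alpha> i + \<beta> i)"

definition jet_rem ::
  "('n::finite mindex \<Rightarrow> real ^ 'n \<Rightarrow> real) \<Rightarrow> nat \<Rightarrow> real ^ 'n \<Rightarrow> 'n mindex \<Rightarrow> real ^ 'n \<Rightarrow> real" where
  "jet_rem F p a \<alpha> b = F \<alpha> b -
     (\<Sum>\<beta>\<in>{\<beta>. mlen \<beta> \<le> p - mlen \<alpha>}. mpow (b - a) \<beta> / mfact \<beta> * F (madd \<alpha> \<beta>) a)"

definition BM_E :: "(nat \<Rightarrow> real) \<Rightarrow> (real ^ 'n::finite) set
                     \<Rightarrow> ('n mindex \<Rightarrow> real ^ 'n \<Rightarrow> real) set" where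
  "BM_E M E = {F. (\<forall>\<alpha>. continuous_on E (F \<alpha>)) \<and>
     (\<exists>C>0. \<exists>\<rho>>0.
        (\<forall>\<alpha>. \<forall>a\<in>E. \<bar>F \<alpha> a\<bar> \<le> C * \<rho> ^ mlen \<alpha> * M (mlen \<alpha>)) \<and>
        (\<forall>\<alpha> p. \<forall>a\<in>E. \<forall>b\<in>E. p \<ge> mlen \<alpha> \<longrightarrow>
           \<bar>jet_rem F p a \<alpha> b\<bar> \<le> C * \<rho> ^ (p + 1) * M (p + 1)
              * norm (b - a) ^ (p + 1 - mlen \<alpha>) / fact (p + 1 - mlen \<alpha>)))}"

definition Bomega_E :: "(real \<Rightarrow> real) \<Rightarrow> (real ^ 'n::finite) set
                     \<Rightarrow> ('n mindex \<Rightarrow> real ^ 'n \<Rightarrow> real) set" where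
  "Bomega_E \<omega> E = (\<Union>x\<in>{0<..}. BM_E (Wseq \<omega> x) E)"

end

theory Submission
  imports Defs
begin


lemma mu_ge1: fixes mu :: "nat \<Rightarrow> real" assumes "mu 0 = 1" "mono mu" shows "mu k \<ge> (1::real)"
  using monoD[OF assms(2), of 0 k] assms(1) by simp

lemma Mseq_Suc: "Mseq mu (Suc k) = Mseq mu k * mu (Suc k)"
  by (simp add: Mseq_def prod.atLeast0_atMost_Suc)

lemma Mseq_ge1: assumes "mu 0 = 1" "mono mu" shows "Mseq mu k \<ge> 1"
  unfolding Mseq_def by (rule prod_ge_1) (use mu_ge1[OF assms] in auto)

lemma mu_pos: fixes mu :: "nat \<Rightarrow> real" assumes "mu 0 = 1" "mono mu" shows "mu k > 0"
  using mu_ge1[OF assms, of k] by simp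

lemma Mseq_pos: assumes "mu 0 = 1" "mono mu" shows "Mseq mu k > 0"
  using Mseq_ge1[OF assms, of k] by simp

lemma Mseq_lower: assumes "mu 0 = 1" "mono mu"
  shows "Mseq mu (n+t) \<ge> Mseq mu n * mu n ^ t"
proof (induction t)
  case 0 then show ?case by simp
next
  case (Suc t)
  have "mu n \<le> mu (Suc (n+t))" using assms(2) by (simp add: monoD)
  moreover have "mu n \<ge> 0" using mu_ge1[OF assms] by (smt (verit))
  moreover have "Mseq mu n \<ge> 0" using Mseq_ge1[OF assms] by (smt (verit))
  ultimately have "Mseq mu n * mu n ^ t * mu n \<le> Mseq mu (n+t) * mu (Suc (n+t))"
    using Suc Mseq_ge1[OF assms, of "n+t"] by (intro mult_mono) auto
  then show ?case by (simp add: Mseq_Suc algebra_simps)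
qed

lemma Mseq_upper: assumes "mu 0 = 1" "mono mu"
  shows "Mseq mu (n+t) \<le> Mseq mu n * mu (n+t) ^ t"
proof (induction t)
  case 0 then show ?case by simp
next
  case (Suc t)
  have m: "mu (n+t) \<le> mu (Suc (n+t))" using assms(2) by (simp add: monoD)
  have p: "mu (n+t) \<ge> 0" using mu_ge1[OF assms] by (smt (verit))
  have q: "Mseq mu n \<ge> 0" using Mseq_ge1[OF assms] by (smt (verit))
  have "Mseq mu (Suc (n+t)) = Mseq mu (n+t) * mu (Suc (n+t))" by (simp add: Mseq_Suc)
  also have "\<dots> \<le> Mseq mu n * mu (n+t) ^ t * mu (Suc (n+t))"
    using Suc mu_ge1[OF assms, of "Suc (n+t)"] by (intro mult_right_mono) auto
  also have "\<dots> \<le> Mseq mu n * mu (Suc (n+t)) ^ t * mu (Suc (n+t))"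
    using m p q mu_ge1[OF assms, of "Suc (n+t)"] by (intro mult_right_mono mult_left_mono power_mono) auto
  finally show ?case by (simp add: algebra_simps)
qed

lemma Mseq_le_pow: assumes "mu 0 = 1" "mono mu" shows "Mseq mu k \<le> mu k ^ k"
  using Mseq_upper[OF assms, of 0 k] assms(1) by (simp add: Mseq_def)



lemma ln_Mseq_lower: assumes "mu 0 = 1" "mono mu"
  shows "ln (Mseq mu (n+t)) \<ge> ln (Mseq mu n) + real t * ln (mu n)"
proof -
  have "ln (Mseq mu n * mu n ^ t) \<le> ln (Mseq mu (n+t))"
    using Mseq_lower[OF assms] Mseq_ge1[OF assms] mu_ge1[OF assms]
    by (subst ln_le_cancel_iff) (auto simp: Mseq_pos[OF assms] mu_pos[OF assms])
  moreover have "ln (Mseq mu n * mu n ^ t) = ln (Mseq mu n) + real t * ln (mu n)"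
    using Mseq_pos[OF assms, of n] mu_pos[OF assms, of n] by (simp add: ln_mult ln_realpow)
  ultimately show ?thesis by simp
qed

lemma ln_Mseq_upper: assumes "mu 0 = 1" "mono mu"
  shows "ln (Mseq mu (n+t)) \<le> ln (Mseq mu n) + real t * ln (mu (n+t))"
proof -
  have "ln (Mseq mu (n+t)) \<le> ln (Mseq mu n * mu (n+t) ^ t)"
    using Mseq_upper[OF assms] Mseq_ge1[OF assms] mu_ge1[OF assms]
    by (subst ln_le_cancel_iff) (auto simp: Mseq_pos[OF assms] mu_pos[OF assms])
  moreover have "ln (Mseq mu n * mu (n+t) ^ t) = ln (Mseq mu n) + real t * ln (mu (n+t))"
    using Mseq_pos[OF assms, of n] mu_pos[OF assms, of "n+t"] by (simp add: ln_mult ln_realpow)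
  ultimately show ?thesis by simp
qed

lemma omega_bdd:
  assumes ws: "weight_sequence mu" and t: "t > 0"
  shows "bdd_above (range (\<lambda>k. ln (t^k / Mseq mu k)))"
proof -
  have m0: "mu 0 = 1" "mono mu" using ws by (auto simp: weight_sequence_def)
  have "filterlim (\<lambda>k. root k (Mseq mu k)) at_top sequentially"
    using ws by (simp add: weight_sequence_def)
  then have "eventually (\<lambda>k. t \<le> root k (Mseq mu k)) sequentially"
    by (simp add: filterlim_at_top)
  moreover have "eventually (\<lambda>k. k > (0::nat)) sequentially"
    by (simp add: eventually_gt_at_top)
  ultimately have "eventually (\<lambda>k. t \<le> root k (Mseq mu k) \<and> k > 0) sequentially"
    by (rule eventually_conj)
  then obtain N where N: "\<And>k. k \<ge> N \<Longrightarrow> t \<le> root k (Mseq mu k) \<and> k > 0"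
    by (auto simp: eventually_sequentially)
  have le0: "ln (t^k / Mseq mu k) \<le> 0" if "k \<ge> N" for k
  proof -
    have k: "k > 0" "t \<le> root k (Mseq mu k)" using N[OF that] by auto
    have "t^k \<le> root k (Mseq mu k) ^ k" using k t by (intro power_mono) auto
    also have "\<dots> = Mseq mu k" using k Mseq_ge1[OF m0, of k] by (simp add: real_root_pow_pos2)
    finally have "t^k / Mseq mu k \<le> 1" using Mseq_ge1[OF m0, of k] by simp
    then show ?thesis using t Mseq_ge1[OF m0, of k] by (subst ln_le_zero_iff) auto
  qed
  let ?B = "max 0 (Max ((\<lambda>k. ln (t^k / Mseq mu k)) ` {..<N}))"
  show ?thesis
  proof (rule bdd_aboveI2)
    fix k
    show "ln (t^k / Mseq mu k) \<le> ?B"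
    proof (cases "k < N")
      case True then show ?thesis by (intro max.coboundedI2 Max_ge) auto
    next
      case False then show ?thesis using le0[of k] by auto
    qed
  qed
qed

lemma omega_ge:
  assumes ws: "weight_sequence mu" and t: "t > 0"
  shows "ln (t^k / Mseq mu k) \<le> omegaM mu t"
  unfolding omegaM_def using t by (auto intro: cSUP_upper omega_bdd[OF ws t])

lemma omega_le:
  assumes t: "t > 0" and X: "\<And>k. ln (t^k / Mseq mu k) \<le> X"
  shows "omegaM mu t \<le> X"
  unfolding omegaM_def using t by (auto intro: cSUP_least X)

lemma omega_nonneg:
  assumes ws: "weight_sequence mu"
  shows "omegaM mu t \<ge> 0"
proof (cases "t > 0")
  case True
  have "mu 0 = 1" using ws by (simp add: weight_sequence_def)
  then have "ln (t^0 / Mseq mu 0) = 0" by (simp add: Mseq_def)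
  then show ?thesis using omega_ge[OF ws True, of 0] by simp
qed (simp add: omegaM_def)

lemma omega_exp_ge:
  assumes ws: "weight_sequence mu"
  shows "s * real k - ln (Mseq mu k) \<le> omegaM mu (exp s)"
proof -
  have m0: "mu 0 = 1" "mono mu" using ws by (auto simp: weight_sequence_def)
  have "ln (exp s ^ k / Mseq mu k) = s * real k - ln (Mseq mu k)"
    using Mseq_ge1[OF m0, of k] by (simp add: ln_div ln_realpow exp_of_nat_mult[symmetric] mult.commute)
  then show ?thesis using omega_ge[OF ws, of "exp s" k] by simp
qed

lemma phistar_upper:
  assumes ws: "weight_sequence mu" and x: "x > 0" and xr: "x \<le> real r" 
  shows "phistar (omegaM mu) (x * real k) / x \<le> ln (Mseq mu (r*k)) / real r"
proof -
  have r: "real r > 0" using x xr by simp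
  have "phistar (omegaM mu) (x * real k) \<le> x * (ln (Mseq mu (r*k)) / real r)"
    unfolding phistar_def
  proof (rule cSUP_least)
    fix s :: real assume "s \<in> {0..}"
    have w0: "omegaM mu (exp s) \<ge> 0" by (rule omega_nonneg[OF ws])
    have w1: "s * real (r*k) - ln (Mseq mu (r*k)) \<le> omegaM mu (exp s)"
      by (rule omega_exp_ge[OF ws])
    have "x * (s * real (r*k) - ln (Mseq mu (r*k))) \<le> x * omegaM mu (exp s)"
      using w1 x by simp
    also have "\<dots> \<le> real r * omegaM mu (exp s)" using w0 xr by (intro mult_right_mono) auto
    finally have "x * (s * real (r*k) - ln (Mseq mu (r*k))) / real r \<le> omegaM mu (exp s)"
      using r by (simp add: divide_le_eq mult.commute)
    then show "s * (x * real k) - omegaM mu (exp s) \<le> x * (ln (Mseq mu (r*k)) / real r)"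
      using r by (simp add: field_simps)
  qed simp
  then show ?thesis using x by (simp add: divide_le_eq mult.commute)
qed

lemma phistar_nat:
  assumes ws: "weight_sequence mu"
  shows "phistar (omegaM mu) (real n) = ln (Mseq mu n)"
proof -
  have m0: "mu 0 = 1" "mono mu" using ws by (auto simp: weight_sequence_def)
  have up: "s * real n - omegaM mu (exp s) \<le> ln (Mseq mu n)" for s
    using omega_exp_ge[OF ws, of s n] by simp
  have le: "phistar (omegaM mu) (real n) \<le> ln (Mseq mu n)"
    unfolding phistar_def by (rule cSUP_least) (auto intro: up)
  define s where "s = ln (mu n)"
  have mun: "mu n \<ge> 1" by (rule mu_ge1[OF m0])
  have s0: "s \<in> {0..}" using mun by (simp add: s_def)
  have es: "exp s = mu n" using mun by (simp add: s_def)
  have "omegaM mu (mu n) \<le> real n * s - ln (Mseq mu n)"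
  proof (rule omega_le)
    show "mu n > 0" using mun by simp
    fix k
    have eq: "ln (mu n ^ k / Mseq mu k) = real k * s - ln (Mseq mu k)"
      using mun Mseq_ge1[OF m0, of k] by (simp add: ln_div ln_realpow s_def)
    show "ln (mu n ^ k / Mseq mu k) \<le> real n * s - ln (Mseq mu n)"
    proof (cases "k \<ge> n")
      case True
      then obtain t where "k = n + t" using le_Suc_ex by blast
      then show ?thesis using eq ln_Mseq_lower[OF m0, of n t] by (simp add: s_def algebra_simps)
    next
      case False
      then obtain t where kt: "n = k + t" by (metis le_Suc_ex nat_le_linear)
      then show ?thesis using eq ln_Mseq_upper[OF m0, of k t] by (simp add: s_def algebra_simps)
    qed
  qed
  then have "ln (Mseq mu n) \<le> s * real n - omegaM mu (exp s)" using es by (simp add: algebra_simps)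
  also have "\<dots> \<le> phistar (omegaM mu) (real n)"
    unfolding phistar_def by (rule cSUP_upper[OF s0]) (auto intro!: bdd_aboveI2 up)
  finally show ?thesis using le by simp
qed



lemma mg_C:
  assumes "moderate_growth mu" "mu 0 = 1" "mono mu"
  shows "\<exists>C::real. C \<ge> 1 \<and> (\<forall>j k. Mseq mu (j+k) \<le> C^(j+k) * Mseq mu j * Mseq mu k)"
proof -
  obtain C0 where C0: "\<And>j k. Mseq mu (j+k) \<le> C0^(j+k) * Mseq mu j * Mseq mu k"
    using assms by (auto simp: moderate_growth_def)
  define C where "C = max 1 \<bar>C0\<bar>"
  have "Mseq mu (j+k) \<le> C^(j+k) * Mseq mu j * Mseq mu k" for j k
  proof -
    have p: "0 < Mseq mu j * Mseq mu k" using Mseq_pos[OF assms(2,3)] by simp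
    have "C0^(j+k) \<le> \<bar>C0\<bar>^(j+k)" by (metis power_abs abs_ge_self)
    also have "\<dots> \<le> C^(j+k)" unfolding C_def by (intro power_mono) auto
    finally have "C0^(j+k) * (Mseq mu j * Mseq mu k) \<le> C^(j+k) * (Mseq mu j * Mseq mu k)"
      using p by (intro mult_right_mono) auto
    then show ?thesis using C0[of j k] by (simp add: mult.assoc)
  qed
  then show ?thesis by (intro exI[of _ C]) (auto simp: C_def)
qed

lemma Mseq_mult_upper:
  assumes m0: "mu 0 = 1" "mono mu" and C: "C \<ge> (1::real)"
    and mg: "\<And>j k. Mseq mu (j+k) \<le> C^(j+k) * Mseq mu j * Mseq mu k"
  shows "Mseq mu (i*k) \<le> C^(i*k*i) * Mseq mu k ^ i"
proof (induction i)
  case 0 then show ?case using m0 by (simp add: Mseq_def)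
next
  case (Suc i)
  have "Mseq mu (Suc i * k) = Mseq mu (i*k + k)" by (simp add: add.commute)
  also have "\<dots> \<le> C^(i*k+k) * Mseq mu (i*k) * Mseq mu k" by (rule mg)
  also have "\<dots> \<le> C^(i*k+k) * (C^(i*k*i) * Mseq mu k ^ i) * Mseq mu k"
    using Suc C Mseq_pos[OF m0, of k] by (intro mult_right_mono mult_left_mono) auto
  also have "\<dots> = C^(i*k+k+i*k*i) * Mseq mu k ^ Suc i" by (simp add: power_add algebra_simps)
  also have "\<dots> \<le> C^(Suc i * k * Suc i) * Mseq mu k ^ Suc i"
    using C Mseq_pos[OF m0, of k] by (intro mult_right_mono power_increasing) (auto simp: algebra_simps)
  finally show ?case .
qed

lemma W_upper:
  assumes ws: "weight_sequence mu" and mg: "moderate_growth mu" and x: "x > 0"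
  shows "\<exists>h>0. \<forall>k. Wseq (omegaM mu) x k \<le> h^k * Mseq mu k"
proof -
  have m0: "mu 0 = 1" "mono mu" using ws by (auto simp: weight_sequence_def)
  obtain C :: real where C: "C \<ge> 1" "\<And>j k. Mseq mu (j+k) \<le> C^(j+k) * Mseq mu j * Mseq mu k"
    using mg_C[OF mg m0] by auto
  define r where "r = nat \<lceil>x\<rceil>"
  have xr: "x \<le> real r" unfolding r_def by linarith
  have r0: "real r > 0" using x xr by simp
  have "Wseq (omegaM mu) x k \<le> (C^r)^k * Mseq mu k" for k
  proof -
    have "Wseq (omegaM mu) x k \<le> exp (ln (Mseq mu (r*k)) / real r)"
      unfolding Wseq_def using phistar_upper[OF ws x xr] by simp
    also have "exp (ln (Mseq mu (r*k)) / real r) \<le> exp (real (r*k) * ln C + ln (Mseq mu k))"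
    proof -
      have "ln (Mseq mu (r*k)) \<le> ln (C^(r*k*r) * Mseq mu k ^ r)"
        using Mseq_mult_upper[OF m0 C, of r k] Mseq_pos[OF m0] C
        by (subst ln_le_cancel_iff) auto
      also have "\<dots> = real r * (real (r*k) * ln C + ln (Mseq mu k))"
        using Mseq_pos[OF m0, of k] C by (simp add: ln_mult ln_realpow algebra_simps)
      finally show ?thesis using r0 by (simp add: divide_le_eq mult.commute)
    qed
    also have "\<dots> = (C^r)^k * Mseq mu k"
    proof -
      have "exp (real (r*k) * ln C) = C^(r*k)" using C by (subst exp_of_nat_mult) simp
      then show ?thesis using Mseq_pos[OF m0, of k] by (simp add: exp_add power_mult)
    qed
    finally show ?thesis by simp
  qed
  then show ?thesis using C by (intro exI[of _ "C^r"]) auto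
qed

lemma W_one:
  assumes ws: "weight_sequence mu"
  shows "Wseq (omegaM mu) 1 k = Mseq mu k"
proof -
  have m0: "mu 0 = 1" "mono mu" using ws by (auto simp: weight_sequence_def)
  show ?thesis unfolding Wseq_def using phistar_nat[OF ws, of k] Mseq_pos[OF m0, of k] by simp
qed



lemma mu_double:
  assumes m0: "mu 0 = 1" "mono mu" and C: "C \<ge> (1::real)"
    and mg: "\<And>j k. Mseq mu (j+k) \<le> C^(j+k) * Mseq mu j * Mseq mu k"
  shows "mu (2*k) \<le> C^3 * mu k"
proof (cases k)
  case 0
  have "1 \<le> C^3" using C by simp
  then show ?thesis using 0 m0 by simp
next
  case (Suc n)
  have "Mseq mu (2*k) * mu (2*k) ^ k \<le> Mseq mu (2*k + k)" by (rule Mseq_lower[OF m0])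
  also have "\<dots> \<le> C^(2*k+k) * Mseq mu (2*k) * Mseq mu k" by (rule mg)
  also have "\<dots> \<le> C^(2*k+k) * Mseq mu (2*k) * mu k ^ k"
    using Mseq_le_pow[OF m0, of k] Mseq_pos[OF m0, of "2*k"] C by (intro mult_left_mono) auto
  finally have "Mseq mu (2*k) * mu (2*k) ^ k \<le> Mseq mu (2*k) * (C^3 * mu k)^k"
    by (simp add: power_mult_distrib power_mult[symmetric] algebra_simps)
  then have "mu (2*k) ^ Suc n \<le> (C^3 * mu k) ^ Suc n"
    using Mseq_pos[OF m0, of "2*k"] Suc by simp
  then show ?thesis
    by (rule power_le_imp_le_base) (use C mu_pos[OF m0, of k] in simp)
qed

lemma mu_subexp:
  assumes m0: "mu 0 = 1" "mono mu" and C: "C \<ge> (1::real)"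
    and mg: "\<And>j k. Mseq mu (j+k) \<le> C^(j+k) * Mseq mu j * Mseq mu k"
    and h: "h > 1"
  shows "\<exists>B\<ge>1. \<forall>k. mu k \<le> B * h^k"
proof -
  obtain K0 where K0: "C^3 < h^K0" using real_arch_pow[OF h] by blast
  define K where "K = Suc K0"
  have "h^K0 \<le> h^K" unfolding K_def using h by (intro power_increasing) auto
  then have K: "C^3 < h^K" "K \<ge> 1" using K0 unfolding K_def by auto
  define B where "B = mu (2*K)"
  have B1: "B \<ge> 1" unfolding B_def by (rule mu_ge1[OF m0])
  have "mu k \<le> B * h^k" for k
  proof (induction k rule: less_induct)
    case (less k)
    show ?case
    proof (cases "k \<le> 2*K")
      case True
      have "mu k \<le> B" unfolding B_def using True m0(2) by (simp add: monoD)
      also have "\<dots> \<le> B * h^k" using B1 h by simp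
      finally show ?thesis .
    next
      case False
      define m where "m = (k+1) div 2"
      have mk: "m < k" "k \<le> 2*m" "K + m \<le> k" using False K(2) unfolding m_def by presburger+
      have "mu k \<le> mu (2*m)" using mk m0(2) by (simp add: monoD)
      also have "\<dots> \<le> C^3 * mu m" by (rule mu_double[OF m0 C mg])
      also have "\<dots> \<le> h^K * (B * h^m)"
        using K(1) less[OF mk(1)] mu_pos[OF m0, of m] C h by (intro mult_mono) auto
      also have "\<dots> = B * h^(K+m)" by (simp add: power_add)
      also have "\<dots> \<le> B * h^k" using mk h B1 by (intro mult_left_mono power_increasing) auto
      finally show ?thesis .
    qed
  qed
  then show ?thesis using B1 by blast
qed

lemma prodQ_lower:
  assumes m0: "mu 0 = 1" "mono mu" and Q: "Q \<ge> (1::nat)" and d: "\<delta> \<ge> (1::real)"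
    and k0: "k0 \<ge> 1" and hyp: "\<And>k. k \<ge> k0 \<Longrightarrow> \<delta> * mu k \<le> mu (Q*k)"
  shows "\<delta>^(k+1) * Mseq mu k \<le> \<delta>^k0 * (\<Prod>j\<in>{0..k}. mu (Q*j))"
proof -
  have base: "Mseq mu k \<le> (\<Prod>j\<in>{0..k}. mu (Q*j))" for k
    unfolding Mseq_def
  proof (rule prod_mono)
    fix j assume "j \<in> {0..k}"
    have "j \<le> Q*j" using Q by simp
    then show "0 \<le> mu j \<and> mu j \<le> mu (Q*j)" using m0 mu_ge1[OF m0, of j] by (auto simp: monoD)
  qed
  show ?thesis
  proof (induction k)
    case 0
    have "\<delta> \<le> \<delta>^k0" using d k0 by (metis power_increasing power_one_right)
    then show ?case using m0 by (simp add: Mseq_def)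
  next
    case (Suc k)
    show ?case
    proof (cases "Suc k \<ge> k0")
      case True
      have "\<delta>^(Suc k+1) * Mseq mu (Suc k) = (\<delta>^(k+1) * Mseq mu k) * (\<delta> * mu (Suc k))"
        by (simp add: Mseq_Suc algebra_simps)
      also have "\<dots> \<le> (\<delta>^k0 * (\<Prod>j\<in>{0..k}. mu (Q*j))) * mu (Q * Suc k)"
      proof (rule mult_mono[OF Suc.IH hyp[OF True]])
        have "0 \<le> (\<Prod>j\<in>{0..k}. mu (Q*j))" by (intro prod_nonneg) (use mu_pos[OF m0] in \<open>simp add: less_imp_le\<close>)
        then show "0 \<le> \<delta>^k0 * (\<Prod>j\<in>{0..k}. mu (Q*j))" using d by simp
        show "0 \<le> \<delta> * mu (Suc k)" using d mu_pos[OF m0, of "Suc k"] by simp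
      qed
      also have "\<dots> = \<delta>^k0 * (\<Prod>j\<in>{0..Suc k}. mu (Q*j))"
        by (simp add: prod.atLeast0_atMost_Suc algebra_simps)
      finally show ?thesis .
    next
      case False
      have "\<delta>^(Suc k+1) \<le> \<delta>^k0" using False d by (intro power_increasing) auto
      then have "\<delta>^(Suc k+1) * Mseq mu (Suc k) \<le> \<delta>^k0 * Mseq mu (Suc k)"
        using Mseq_pos[OF m0, of "Suc k"] by (intro mult_right_mono) auto
      also have "\<dots> \<le> \<delta>^k0 * (\<Prod>j\<in>{0..Suc k}. mu (Q*j))"
        using base[of "Suc k"] d by (intro mult_left_mono) auto
      finally show ?thesis .
    qed
  qed
qed

lemma MQ_prod:
  assumes m0: "mu 0 = 1" "mono mu"
  shows "(\<Prod>j\<in>{0..k}. mu (Q*j)) ^ Q \<le> Mseq mu (Q*(k+1))"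
proof (induction k)
  case 0
  then show ?case using m0 Mseq_ge1[OF m0, of Q] by simp
next
  case (Suc k)
  have nn: "0 \<le> (\<Prod>j\<in>{0..k}. mu (Q*j))" by (intro prod_nonneg) (use mu_pos[OF m0] in \<open>simp add: less_imp_le\<close>)
  have "(\<Prod>j\<in>{0..Suc k}. mu (Q*j)) ^ Q = (\<Prod>j\<in>{0..k}. mu (Q*j)) ^ Q * mu (Q*(k+1)) ^ Q"
    by (simp add: prod.atLeast0_atMost_Suc power_mult_distrib)
  also have "\<dots> \<le> Mseq mu (Q*(k+1)) * mu (Q*(k+1)) ^ Q"
    using Suc mu_ge1[OF m0, of "Q*(k+1)"] by (intro mult_right_mono) auto
  also have "\<dots> \<le> Mseq mu (Q*(k+1) + Q)" by (rule Mseq_lower[OF m0])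
  also have "Q*(k+1) + Q = Q*(Suc k + 1)" by simp
  finally show ?case .
qed



lemma MQ_step:
  assumes m0: "mu 0 = 1" "mono mu" and Q: "Q \<ge> (1::nat)" and d: "\<delta> \<ge> (1::real)"
    and k0: "k0 \<ge> 1" and hyp: "\<And>k. k \<ge> k0 \<Longrightarrow> \<delta> * mu k \<le> mu (Q*k)"
    and B: "B \<ge> 1" and h: "h > 0" and sub: "\<And>k. mu k \<le> B * h^k"
  shows "(\<delta>/h)^(Q*n) * Mseq mu n ^ Q \<le> (\<delta>^(Q*k0) * B^Q) * Mseq mu (Q*n)"
proof (cases n)
  case 0
  have x1: "1 \<le> \<delta>^(Q*k0)" "1 \<le> B^Q" using d B by (simp_all add: one_le_power)
  have "(1::real) \<le> 1 * 1" by simp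
  also have "\<dots> \<le> \<delta>^(Q*k0) * B^Q" using x1 by (intro mult_mono) auto
  finally have "1 \<le> \<delta>^(Q*k0) * B^Q" .
  then show ?thesis using 0 m0 by (simp add: Mseq_def)
next
  case (Suc k)
  define P where "P = (\<Prod>j\<in>{0..k}. mu (Q*j))"
  have Mk: "Mseq mu k > 0" using Mseq_pos[OF m0] by simp
  have a: "(\<delta>^(k+1) * Mseq mu k)^Q \<le> (\<delta>^k0 * P)^Q"
    unfolding P_def using prodQ_lower[OF m0 Q d k0 hyp] Mk d by (intro power_mono) auto
  have b: "(\<delta>^k0 * P)^Q \<le> \<delta>^(Q*k0) * Mseq mu (Q*(k+1))"
    unfolding P_def using MQ_prod[OF m0, of Q k] d
    by (simp add: power_mult_distrib power_mult[symmetric] mult.commute)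
  have c: "(\<delta>/h)^(k+1) * Mseq mu (k+1) \<le> B * (\<delta>^(k+1) * Mseq mu k)"
  proof -
    have "Mseq mu (k+1) \<le> Mseq mu k * (B * h^(k+1))"
      using sub[of "Suc k"] Mk by (simp add: Mseq_Suc)
    then have "(\<delta>/h)^(k+1) * Mseq mu (k+1) \<le> (\<delta>/h)^(k+1) * (Mseq mu k * (B * h^(k+1)))"
      using d h by (intro mult_left_mono) auto
    also have "\<dots> = B * (((\<delta>/h)^(k+1) * h^(k+1)) * Mseq mu k)" by (simp add: algebra_simps)
    also have "(\<delta>/h)^(k+1) * h^(k+1) = \<delta>^(k+1)"
      using h by (simp add: power_mult_distrib[symmetric])
    finally show ?thesis .
  qed
  have "(\<delta>/h)^(Q*n) * Mseq mu n ^ Q = ((\<delta>/h)^(k+1) * Mseq mu (k+1))^Q"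
  proof -
    have "(\<delta>/h)^(Q*n) = ((\<delta>/h)^(k+1))^Q" by (metis power_mult mult.commute Suc Suc_eq_plus1)
    then show ?thesis using Suc by (simp only: power_mult_distrib Suc_eq_plus1)
  qed
  also have "\<dots> \<le> (B * (\<delta>^(k+1) * Mseq mu k))^Q"
    using c d h Mseq_pos[OF m0, of "k+1"] by (intro power_mono) auto
  also have "\<dots> = B^Q * (\<delta>^(k+1) * Mseq mu k)^Q" by (simp add: power_mult_distrib)
  also have "\<dots> \<le> B^Q * (\<delta>^(Q*k0) * Mseq mu (Q*(k+1)))"
    using a b B by (intro mult_left_mono) auto
  finally show ?thesis using Suc by (simp add: algebra_simps)
qed

lemma iter_growth:
  fixes M :: "nat \<Rightarrow> real"
  assumes pos: "\<And>n. M n > 0" and eta: "\<eta> > 0" and c: "c > 0"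
    and step: "\<And>n. c * \<eta>^(Q*n) * M n ^ Q \<le> M (Q*n)"
  shows "\<exists>cj>0. \<forall>n. cj * (\<eta>^j)^(Q^j*n) * M n ^ (Q^j) \<le> M (Q^j*n)"
proof (induction j)
  case 0 then show ?case by (intro exI[of _ 1]) simp
next
  case (Suc j)
  then obtain cj where cj: "cj > 0" "\<And>n. cj * (\<eta>^j)^(Q^j*n) * M n ^ (Q^j) \<le> M (Q^j*n)" by blast
  have "c * cj^Q * (\<eta>^Suc j)^(Q^Suc j*n) * M n ^ (Q^Suc j) \<le> M (Q^Suc j*n)" for n
  proof -
    have "c * cj^Q * (\<eta>^Suc j)^(Q^Suc j*n) * M n ^ (Q^Suc j)
        = c * \<eta>^(Q*(Q^j*n)) * (cj * (\<eta>^j)^(Q^j*n) * M n ^ (Q^j))^Q"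
      by (simp add: power_mult_distrib power_mult[symmetric] power_add mult_ac)
    also have "\<dots> \<le> c * \<eta>^(Q*(Q^j*n)) * M (Q^j*n) ^ Q"
    proof (intro mult_left_mono power_mono)
      show "0 \<le> cj * (\<eta>^j)^(Q^j*n) * M n ^ (Q^j)"
        using cj(1) pos[of n] eta by (intro mult_nonneg_nonneg zero_le_power) auto
    qed (use cj pos eta c in auto)
    also have "\<dots> \<le> M (Q*(Q^j*n))" by (rule step)
    also have "Q*(Q^j*n) = Q^Suc j * n" by simp
    finally show ?thesis .
  qed
  then show ?case using cj c by (intro exI[of _ "c * cj^Q"]) auto
qed



lemma W_lower:
  assumes ws: "weight_sequence mu" and mg: "moderate_growth mu"
    and Qc: "\<exists>Q::nat. Q \<ge> 2 \<and> liminf (\<lambda>k. ereal (mu (Q * k) / mu k)) > 1"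
    and rho: "\<rho> > 0"
  shows "\<exists>r::nat. r > 0 \<and> (\<exists>D. \<forall>k. \<rho>^k * Mseq mu k \<le> D * Wseq (omegaM mu) (real r) k)"
proof -
  have m0: "mu 0 = 1" "mono mu" using ws by (auto simp: weight_sequence_def)
  obtain Q :: nat where Q: "Q \<ge> 2" and lim: "liminf (\<lambda>k. ereal (mu (Q * k) / mu k)) > 1"
    using Qc by blast
  obtain \<delta> where d: "1 < ereal \<delta>" "ereal \<delta> < liminf (\<lambda>k. ereal (mu (Q * k) / mu k))"
    using ereal_dense2[OF lim] by blast
  have d1: "\<delta> > 1" using d(1) by simp
  have "eventually (\<lambda>k. ereal \<delta> < ereal (mu (Q * k) / mu k)) sequentially"
    by (rule less_LiminfD[OF d(2)])
  then obtain k0' where k0': "\<And>k. k \<ge> k0' \<Longrightarrow> \<delta> < mu (Q * k) / mu k"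
    by (auto simp: eventually_sequentially)
  define k0 where "k0 = max 1 k0'"
  have k0: "k0 \<ge> 1" by (simp add: k0_def)
  have hyp: "\<delta> * mu k \<le> mu (Q*k)" if "k \<ge> k0" for k
  proof -
    have "\<delta> < mu (Q * k) / mu k" using k0' that by (simp add: k0_def)
    then show ?thesis using mu_pos[OF m0, of k] by (simp add: less_divide_eq)
  qed
  obtain C :: real where C: "C \<ge> 1" "\<And>j k. Mseq mu (j+k) \<le> C^(j+k) * Mseq mu j * Mseq mu k"
    using mg_C[OF mg m0] by auto
  define h where "h = (1 + \<delta>) / 2"
  have h: "h > 1" "h < \<delta>" using d1 by (auto simp: h_def)
  obtain B where B: "B \<ge> 1" "\<And>k. mu k \<le> B * h^k"
    using mu_subexp[OF m0 C h(1)] by blast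
  define \<eta> where "\<eta> = \<delta> / h"
  have eta: "\<eta> > 1" using h by (simp add: \<eta>_def)
  define c where "c = 1 / (\<delta>^(Q*k0) * B^Q)"
  have cpos: "c > 0" using d1 B by (simp add: c_def)
  have Q1: "Q \<ge> 1" using Q by simp
  have step: "c * \<eta>^(Q*n) * Mseq mu n ^ Q \<le> Mseq mu (Q*n)" for n
  proof -
    have "\<eta>^(Q*n) * Mseq mu n ^ Q \<le> (\<delta>^(Q*k0) * B^Q) * Mseq mu (Q*n)"
      unfolding \<eta>_def
      by (rule MQ_step[OF m0 Q1 _ k0 hyp B(1) _ B(2)]) (use d1 h in auto)
    moreover have "\<delta>^(Q*k0) * B^Q > 0" using d1 B by simp
    ultimately show ?thesis by (simp add: c_def field_simps)
  qed
  obtain j where j: "\<rho> < \<eta>^j" using real_arch_pow[OF eta] by blast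
  obtain cj where cj: "cj > 0" "\<And>n. cj * (\<eta>^j)^(Q^j*n) * Mseq mu n ^ (Q^j) \<le> Mseq mu (Q^j*n)"
    using iter_growth[of "Mseq mu" \<eta> c Q j] Mseq_pos[OF m0] eta cpos step by auto
  define r where "r = Q^j"
  have r: "r > 0" using Q by (simp add: r_def)
  have "\<rho>^k * Mseq mu k \<le> exp (- ln cj / real r) * Wseq (omegaM mu) (real r) k" for k
  proof -
    define X where "X = \<rho>^k * Mseq mu k"
    have X: "X > 0" using rho Mseq_pos[OF m0, of k] by (simp add: X_def)
    have "cj * X^r = cj * (\<rho>^(r*k) * Mseq mu k ^ r)"
      by (simp add: X_def power_mult_distrib power_mult[symmetric] mult.commute)
    also have "\<dots> \<le> cj * ((\<eta>^j)^(r*k) * Mseq mu k ^ r)"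
      using cj(1) rho j Mseq_pos[OF m0, of k]
      by (intro mult_left_mono mult_right_mono power_mono) auto
    also have "\<dots> \<le> Mseq mu (r*k)" using cj(2)[of k] by (simp add: r_def mult.assoc)
    finally have le: "cj * X^r \<le> Mseq mu (r*k)" .
    have "ln cj + real r * ln X = ln (cj * X^r)" using cj(1) X by (simp add: ln_mult ln_realpow)
    also have "\<dots> \<le> ln (Mseq mu (r*k))" using le cj(1) X Mseq_pos[OF m0, of "r*k"] by (subst ln_le_cancel_iff) auto
    finally have "ln X \<le> (- ln cj) / real r + ln (Mseq mu (r*k)) / real r"
      using r by (simp add: field_simps)
    then have "exp (ln X) \<le> exp ((- ln cj) / real r + ln (Mseq mu (r*k)) / real r)" by simp
    then have e: "X \<le> exp (- ln cj / real r) * exp (ln (Mseq mu (r*k)) / real r)"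
      using X by (simp only: exp_ln exp_add)
    moreover have "Wseq (omegaM mu) (real r) k = exp (ln (Mseq mu (r*k)) / real r)"
      unfolding Wseq_def using phistar_nat[OF ws, of "r*k"] by simp
    ultimately show ?thesis by (simp add: X_def)
  qed
  then show ?thesis using r by blast
qed



lemma BM_E_mono:
  fixes E :: "(real ^ 'n::finite) set"
  assumes h: "h > 0" and AB: "\<And>k. A k \<le> h^k * B k"
  shows "BM_E A E \<subseteq> BM_E B E"
proof
  fix F assume "F \<in> BM_E A E"
  then have "(\<forall>\<alpha>::'n mindex. continuous_on E (F \<alpha>)) \<and>
     (\<exists>C>0. \<exists>\<rho>>0.
        (\<forall>\<alpha>. \<forall>a\<in>E. \<bar>F \<alpha> a\<bar> \<le> C * \<rho> ^ mlen \<alpha> * A (mlen \<alpha>)) \<and>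
        (\<forall>\<alpha> p. \<forall>a\<in>E. \<forall>b\<in>E. p \<ge> mlen \<alpha> \<longrightarrow>
           \<bar>jet_rem F p a \<alpha> b\<bar> \<le> C * \<rho> ^ (p + 1) * A (p + 1)
              * norm (b - a) ^ (p + 1 - mlen \<alpha>) / fact (p + 1 - mlen \<alpha>)))"
    unfolding BM_E_def by (rule CollectD)
  then obtain C \<rho> where cont: "\<forall>\<alpha>. continuous_on E (F \<alpha>)" and C: "C > 0" and rho: "\<rho> > 0"
    and b1: "\<forall>\<alpha>. \<forall>a\<in>E. \<bar>F \<alpha> a\<bar> \<le> C * \<rho> ^ mlen \<alpha> * A (mlen \<alpha>)"
    and b2: "\<forall>\<alpha> p. \<forall>a\<in>E. \<forall>b\<in>E. p \<ge> mlen \<alpha> \<longrightarrow>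
           \<bar>jet_rem F p a \<alpha> b\<bar> \<le> C * \<rho> ^ (p + 1) * A (p + 1)
              * norm (b - a) ^ (p + 1 - mlen \<alpha>) / fact (p + 1 - mlen \<alpha>)"
    by blast
  have AB': "C * \<rho>^n * A n \<le> C * (\<rho>*h)^n * B n" for n
  proof -
    have "C * \<rho>^n * A n \<le> C * \<rho>^n * (h^n * B n)" using C rho AB by (intro mult_left_mono) auto
    then show ?thesis by (simp add: power_mult_distrib mult_ac)
  qed
  have rho': "0 < \<rho>*h" using rho h by simp
  have b1': "\<forall>\<alpha>::'n mindex. \<forall>a\<in>E. \<bar>F \<alpha> a\<bar> \<le> C * (\<rho>*h) ^ mlen \<alpha> * B (mlen \<alpha>)"
  proof (intro allI ballI)
    fix \<alpha> :: "'n mindex" and a assume a: "a \<in> E"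
    have "\<bar>F \<alpha> a\<bar> \<le> C * \<rho> ^ mlen \<alpha> * A (mlen \<alpha>)" using b1 a by blast
    then show "\<bar>F \<alpha> a\<bar> \<le> C * (\<rho>*h) ^ mlen \<alpha> * B (mlen \<alpha>)"
      using AB'[of "mlen \<alpha>"] by (rule order_trans)
  qed
  have b2': "\<forall>(\<alpha>::'n mindex) p. \<forall>a\<in>E. \<forall>b\<in>E. p \<ge> mlen \<alpha> \<longrightarrow>
           \<bar>jet_rem F p a \<alpha> b\<bar> \<le> C * (\<rho>*h) ^ (p + 1) * B (p + 1)
              * norm (b - a) ^ (p + 1 - mlen \<alpha>) / fact (p + 1 - mlen \<alpha>)"
  proof (intro allI ballI impI)
    fix \<alpha> :: "'n mindex" and p a b assume ab: "a \<in> E" "b \<in> E" and p: "p \<ge> mlen \<alpha>"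
    define N where "N = norm (b - a) ^ (p + 1 - mlen \<alpha>) / fact (p + 1 - mlen \<alpha>)"
    have N: "N \<ge> 0" by (simp add: N_def)
    have "\<bar>jet_rem F p a \<alpha> b\<bar> \<le> C * \<rho> ^ (p + 1) * A (p + 1) * N"
      using b2 ab p by (simp add: N_def)
    also have "\<dots> \<le> C * (\<rho>*h) ^ (p + 1) * B (p + 1) * N"
      using AB'[of "p+1"] N by (intro mult_right_mono) auto
    finally show "\<bar>jet_rem F p a \<alpha> b\<bar> \<le> C * (\<rho>*h) ^ (p + 1) * B (p + 1)
              * norm (b - a) ^ (p + 1 - mlen \<alpha>) / fact (p + 1 - mlen \<alpha>)"
      by (simp add: N_def)
  qed
  show "F \<in> BM_E B E" unfolding BM_E_def
    apply (rule CollectI)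
    apply (rule conjI[OF cont])
    apply (rule exI[of _ C])
    apply (rule conjI[OF C])
    apply (rule exI[of _ "\<rho>*h"])
    apply (rule conjI[OF rho'])
    apply (rule conjI[OF b1' b2'])
    done
qed

theorem lemma5p8:
  fixes mu :: "nat \<Rightarrow> real"
  assumes "weight_sequence mu"
    and "moderate_growth mu"
    and "liminf (\<lambda>k. ereal (root k (mseq mu k))) > 0"
    and "\<exists>Q::nat. Q \<ge> 2 \<and> liminf (\<lambda>k. ereal (mu (Q * k) / mu k)) > 1"
  shows "(BM_Rn (Mseq mu) :: (real ^ 'n::finite \<Rightarrow> real) set) = Bomega_Rn (omegaM mu)
     \<and> (\<forall>E :: (real ^ 'n) set. compact E \<longrightarrow> BM_E (Mseq mu) E = Bomega_E (omegaM mu) E)"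
proof (intro conjI allI impI)
  note ws = assms(1) and mg = assms(2)
  have m0: "mu 0 = 1" "mono mu" using ws by (auto simp: weight_sequence_def)
  show "(BM_Rn (Mseq mu) :: (real ^ 'n::finite \<Rightarrow> real) set) = Bomega_Rn (omegaM mu)"
  proof
    show "(BM_Rn (Mseq mu) :: (real ^ 'n::finite \<Rightarrow> real) set) \<subseteq> Bomega_Rn (omegaM mu)"
    proof
      fix f :: "real ^ 'n \<Rightarrow> real" assume "f \<in> BM_Rn (Mseq mu)"
      then obtain \<rho> C where sm: "smooth f" and rho: "\<rho> > 0"
        and b: "\<And>x \<alpha>. \<bar>dmulti \<alpha> f x\<bar> \<le> C * \<rho> ^ mlen \<alpha> * Mseq mu (mlen \<alpha>)"
        unfolding BM_Rn_def by blast
      have C0: "C \<ge> 0"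
      proof -
        have "0 \<le> C * (\<rho> ^ mlen (\<lambda>_::'n. 0::nat) * Mseq mu (mlen (\<lambda>_::'n. 0::nat)))"
          using order_trans[OF abs_ge_zero b[of "\<lambda>_::'n. 0::nat" 0]] by (simp only: mult.assoc)
        moreover have "\<rho> ^ mlen (\<lambda>_::'n. 0::nat) * Mseq mu (mlen (\<lambda>_::'n. 0::nat)) > 0"
          using rho Mseq_pos[OF m0] by simp
        ultimately show ?thesis by (simp add: zero_le_mult_iff)
      qed
      obtain r :: nat and D where r: "r > 0" and D: "\<And>k. \<rho>^k * Mseq mu k \<le> D * Wseq (omegaM mu) (real r) k"
        using W_lower[OF ws mg assms(4) rho] by blast
      show "f \<in> Bomega_Rn (omegaM mu)" unfolding Bomega_Rn_def
      proof (intro CollectI conjI sm exI[of _ r] r exI[of _ "C*D"] allI)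
        fix x \<alpha>
        have "\<bar>dmulti \<alpha> f x\<bar> \<le> C * (\<rho> ^ mlen \<alpha> * Mseq mu (mlen \<alpha>))" using b by (simp add: mult.assoc)
        also have "\<dots> \<le> C * (D * Wseq (omegaM mu) (real r) (mlen \<alpha>))" using C0 D by (intro mult_left_mono) auto
        finally show "\<bar>dmulti \<alpha> f x\<bar> \<le> C * D * exp (phistar (omegaM mu) (real r * real (mlen \<alpha>)) / real r)"
          by (simp add: Wseq_def mult.assoc)
      qed
    qed
  next
    show "Bomega_Rn (omegaM mu) \<subseteq> (BM_Rn (Mseq mu) :: (real ^ 'n::finite \<Rightarrow> real) set)"
    proof
      fix f :: "real ^ 'n \<Rightarrow> real" assume "f \<in> Bomega_Rn (omegaM mu)"
      then obtain r :: nat and C where sm: "smooth f" and r: "r > 0"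
        and b: "\<And>x \<alpha>. \<bar>dmulti \<alpha> f x\<bar> \<le> C * Wseq (omegaM mu) (real r) (mlen \<alpha>)"
        unfolding Bomega_Rn_def Wseq_def by blast
      have C0: "C \<ge> 0"
      proof -
        have "0 \<le> C * Wseq (omegaM mu) (real r) 0"
          using b[of "\<lambda>_::'n. 0::nat" 0] abs_ge_zero[of "dmulti (\<lambda>_. 0) f 0"] by (simp add: mlen_def)
        moreover have "Wseq (omegaM mu) (real r) 0 > 0" by (simp add: Wseq_def)
        ultimately show ?thesis by (simp add: zero_le_mult_iff)
      qed
      obtain h where h: "h > 0" "\<And>k. Wseq (omegaM mu) (real r) k \<le> h^k * Mseq mu k"
        using W_upper[OF ws mg, of "real r"] r by auto
      have bnd: "\<forall>x \<alpha>. \<bar>dmulti \<alpha> f x\<bar> \<le> C * h ^ mlen \<alpha> * Mseq mu (mlen \<alpha>)"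
      proof (intro allI)
        fix x \<alpha>
        have "\<bar>dmulti \<alpha> f x\<bar> \<le> C * Wseq (omegaM mu) (real r) (mlen \<alpha>)" by (rule b)
        also have "\<dots> \<le> C * (h ^ mlen \<alpha> * Mseq mu (mlen \<alpha>))" using C0 h by (intro mult_left_mono) auto
        finally show "\<bar>dmulti \<alpha> f x\<bar> \<le> C * h ^ mlen \<alpha> * Mseq mu (mlen \<alpha>)" by (simp add: mult.assoc)
      qed
      show "f \<in> BM_Rn (Mseq mu)" unfolding BM_Rn_def using sm h(1) bnd by blast
    qed
  qed
next
  fix E :: "(real ^ 'n) set"
  show "BM_E (Mseq mu) E = Bomega_E (omegaM mu) E"
  proof
    have "BM_E (Mseq mu) E \<subseteq> BM_E (Wseq (omegaM mu) 1) E"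
      by (rule BM_E_mono[where h=1]) (simp_all add: W_one[OF assms(1)] del: One_nat_def)
    moreover have "BM_E (Wseq (omegaM mu) 1) E \<subseteq> (\<Union>x\<in>{0<..}. BM_E (Wseq (omegaM mu) x) E)"
      by (rule UN_upper) simp
    ultimately show "BM_E (Mseq mu) E \<subseteq> Bomega_E (omegaM mu) E"
      unfolding Bomega_E_def by (rule order_trans)
  next
    show "Bomega_E (omegaM mu) E \<subseteq> BM_E (Mseq mu) E"
      unfolding Bomega_E_def
    proof (rule UN_least)
      fix x :: real assume "x \<in> {0<..}"
      then obtain h where h: "h > 0" "\<And>k. Wseq (omegaM mu) x k \<le> h^k * Mseq mu k"
        using W_upper[OF assms(1) assms(2), of x] by auto
      show "BM_E (Wseq (omegaM mu) x) E \<subseteq> BM_E (Mseq mu) E" by (rule BM_E_mono[OF h])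
    qed
  qed
qed

end
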